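(* Let $(\mathcal{A},\cdot,\alpha)$ be a commutative Hom-associative algebra with a derivation $D$ such that $\alpha D=D\alpha$, and let $\lambda\in\mathbb{C}$ be fixed. Define $x\circ y=x\cdot D(y)+\lambda\, x\cdot y$ and $[x,y]^-=x\cdot D(y)-y\cdot D(x)$ for $x,y\in\mathcal{A}$. Then $(\mathcal{A},[\cdot,\cdot]^-,\circ,\alpha)$ is a Hom Gel'fand-Dorfman bialgebra.
   Context: All vector spaces are over $\mathbb{C}$. A Hom-associative algebra is a vector space $\mathcal{A}$ with a bilinear map $\cdot$ and linear map $\alpha$ such that $\alpha(x)\cdot(y\cdot z)=(x\cdot y)\cdot\alpha(z)$ for all $x,y,z$; it is commutative if $x\cdot y=y\cdot x$. A derivation is a linear map $D$ with $D(x\cdot y)=D(x)\cdot y+x\cdot D(y)$. A Hom-Novikov algebra is a vector space with a bilinear operation $\circ$ and a linear endomorphism $\alpha$ such that $(x\circ y)\circ\alpha(z)-\alpha(x)\circ(y\circ z)=(y\circ x)\circ\alpha(z)-\alpha(y)\circ(x\circ z)$ and $(x\circ y)\circ\alpha(z)=(x\circ z)\circ\alpha(y)$. A Hom-Lie algebra is a vector space with a bilinear map $[\cdot,\cdot]$ and linear map $\alpha$ with $[x,y]=-[y,x]$ and $[[x,y],\alpha(z)]+[[y,z],\alpha(x)]+[[z,x],\alpha(y)]=0$. A Hom Gel'fand-Dorfman bialgebra is a vector space $\mathcal{A}$ with a linear endomorphism $\alpha$ and two bilinear operations $[\cdot,\cdot],\circ$ such that $(\mathcal{A},[\cdot,\cdot],\alpha)$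 is a Hom-Lie algebra, $(\mathcal{A},\circ,\alpha)$ is a Hom-Novikov algebra, and $[x\circ y,\alpha(z)]-[x\circ z,\alpha(y)]+[x,y]\circ\alpha(z)-[x,z]\circ\alpha(y)-\alpha(x)\circ[y,z]=0$ for all $x,y,z$. *)

theory Defs
  imports Complex_Main
begin

definition cbilinear :: "(complex \<Rightarrow> 'a::ab_group_add \<Rightarrow> 'a) \<Rightarrow> ('a \<Rightarrow> 'a \<Rightarrow> 'a) \<Rightarrow> bool" where
  "cbilinear smul m \<longleftrightarrow> (\<forall>x. Vector_Spaces.linear smul smul (m x)) \<and> (\<forall>y. Vector_Spaces.linear smul smul (\<lambda>x. m x y))"

definition hom_assoc_algebra :: "(complex \<Rightarrow> 'a::ab_group_add \<Rightarrow> 'a) \<Rightarrow> ('a \<Rightarrow> 'a \<Rightarrow> 'a) \<Rightarrow> ('a \<Rightarrow> 'a) \<Rightarrow> bool" where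
  "hom_assoc_algebra smul m \<alpha> \<longleftrightarrow> vector_space smul \<and> cbilinear smul m \<and> Vector_Spaces.linear smul smul \<alpha> \<and>
     (\<forall>x y z. m (\<alpha> x) (m y z) = m (m x y) (\<alpha> z))"

definition commutative_op :: "('a \<Rightarrow> 'a \<Rightarrow> 'a) \<Rightarrow> bool" where
  "commutative_op m \<longleftrightarrow> (\<forall>x y. m x y = m y x)"

definition is_derivation :: "(complex \<Rightarrow> 'a::ab_group_add \<Rightarrow> 'a) \<Rightarrow> ('a \<Rightarrow> 'a \<Rightarrow> 'a) \<Rightarrow> ('a \<Rightarrow> 'a) \<Rightarrow> bool" where
  "is_derivation smul m D \<longleftrightarrow> Vector_Spaces.linear smul smul D \<and> (\<forall>x y. D (m x y) = m (D x) y + m x (D y))"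

definition hom_novikov :: "(complex \<Rightarrow> 'a::ab_group_add \<Rightarrow> 'a) \<Rightarrow> ('a \<Rightarrow> 'a \<Rightarrow> 'a) \<Rightarrow> ('a \<Rightarrow> 'a) \<Rightarrow> bool" where
  "hom_novikov smul c \<alpha> \<longleftrightarrow> vector_space smul \<and> cbilinear smul c \<and> Vector_Spaces.linear smul smul \<alpha> \<and>
     (\<forall>x y z. c (c x y) (\<alpha> z) - c (\<alpha> x) (c y z) = c (c y x) (\<alpha> z) - c (\<alpha> y) (c x z)) \<and>
     (\<forall>x y z. c (c x y) (\<alpha> z) = c (c x z) (\<alpha> y))"

definition hom_lie :: "(complex \<Rightarrow> 'a::ab_group_add \<Rightarrow> 'a) \<Rightarrow> ('a \<Rightarrow> 'a \<Rightarrow> 'a) \<Rightarrow> ('a \<Rightarrow> 'a) \<Rightarrow> bool" where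
  "hom_lie smul b \<alpha> \<longleftrightarrow> vector_space smul \<and> cbilinear smul b \<and> Vector_Spaces.linear smul smul \<alpha> \<and>
     (\<forall>x y. b x y = - b y x) \<and>
     (\<forall>x y z. b (b x y) (\<alpha> z) + b (b y z) (\<alpha> x) + b (b z x) (\<alpha> y) = 0)"

definition hom_GD_bialgebra :: "(complex \<Rightarrow> 'a::ab_group_add \<Rightarrow> 'a) \<Rightarrow> ('a \<Rightarrow> 'a \<Rightarrow> 'a) \<Rightarrow> ('a \<Rightarrow> 'a \<Rightarrow> 'a) \<Rightarrow> ('a \<Rightarrow> 'a) \<Rightarrow> bool" where
  "hom_GD_bialgebra smul b c \<alpha> \<longleftrightarrow> hom_lie smul b \<alpha> \<and> hom_novikov smul c \<alpha> \<and>
     (\<forall>x y z. b (c x y) (\<alpha> z) - b (c x z) (\<alpha> y) + c (b x y) (\<alpha> z) - c (b x z) (\<alpha> y) - c (\<alpha> x) (b y z) = 0)"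

end

theory Submission
  imports Defs
begin

lemma add_hom_facts:
  fixes f :: "'a::ab_group_add \<Rightarrow> 'b::ab_group_add"
  assumes a: "\<And>x y. f (x + y) = f x + f y"
  shows "f 0 = 0" "\<And>x. f (- x) = - f x" "\<And>x y. f (x - y) = f x - f y"
proof -
  have "f 0 = f 0 + f 0" using a[of 0 0] by simp
  thus z: "f 0 = 0" by simp
  have n: "f (- x) = - f x" for x
  proof -
    have "f x + f (- x) = 0" using a[of x "-x"] z by simp
    thus ?thesis by (metis minus_unique)
  qed
  show "\<And>x. f (- x) = - f x" by (rule n)
  show "f (x - y) = f x - f y" for x y using a[of x "-y"] n[of y] by simp
qed

theorem theorem3p8:
  fixes smul :: "complex \<Rightarrow> 'a::ab_group_add \<Rightarrow> 'a"
    and m :: "'a \<Rightarrow> 'a \<Rightarrow> 'a" and \<alpha> D :: "'a \<Rightarrow> 'a" and lam :: complex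
  assumes "hom_assoc_algebra smul m \<alpha>"
    and "commutative_op m"
    and "is_derivation smul m D"
    and "\<alpha> \<circ> D = D \<circ> \<alpha>"
  shows "hom_GD_bialgebra smul
           (\<lambda>x y. m x (D y) - m y (D x))
           (\<lambda>x y. m x (D y) + smul lam (m x y))
           \<alpha>"
proof -
  have vs: "vector_space smul" and la: "Vector_Spaces.linear smul smul \<alpha>"
    and bil: "cbilinear smul m"
    and ha: "\<And>x y z. m (\<alpha> x) (m y z) = m (m x y) (\<alpha> z)"
    using assms(1) unfolding hom_assoc_algebra_def by auto
  have comm: "\<And>x y. m x y = m y x" using assms(2) unfolding commutative_op_def by auto
  have lD: "Vector_Spaces.linear smul smul D" and der: "\<And>x y. D (m x y) = m (D x) y + m x (D y)"
    using assms(3) unfolding is_derivation_def by auto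
  have aD: "\<And>x. D (\<alpha> x) = \<alpha> (D x)" using assms(4) by (metis comp_apply)
  interpret vector_space smul by (rule vs)
  have l1: "Vector_Spaces.linear smul smul (m x)" for x using bil unfolding cbilinear_def by auto
  have l2: "Vector_Spaces.linear smul smul (\<lambda>a. m a x)" for x using bil unfolding cbilinear_def by auto
  have mr: "m x (a + b) = m x a + m x b" "m x (smul c a) = smul c (m x a)" for x a b c
    using l1[of x] unfolding Vector_Spaces.linear_iff by auto
  have ml: "m (a + b) x = m a x + m b x" "m (smul c a) x = smul c (m a x)" for x a b c
    using l2[of x] unfolding Vector_Spaces.linear_iff by auto
  have Dl: "D (a + b) = D a + D b" "D (smul c a) = smul c (D a)" for a b c
    using lD unfolding Vector_Spaces.linear_iff by auto
  note mr2 = add_hom_facts[of "m x" for x, OF mr(1)]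
  note ml2 = add_hom_facts[of "\<lambda>a. m a x" for x, OF ml(1), simplified]
  note Dl2 = add_hom_facts[of D, OF Dl(1)]
  note sm2 = add_hom_facts[of "smul c" for c, OF scale_right_distrib]
  define T where "T a b c = m (m a b) (\<alpha> c)" for a b c
  have T1: "m (m a b) (\<alpha> c) = T a b c" for a b c by (simp add: T_def)
  have T2: "m (\<alpha> a) (m b c) = T a b c" for a b c by (simp add: T_def ha)
  have T3: "m (\<alpha> c) (m a b) = T a b c" for a b c by (simp add: T_def comm)
  have T4: "m (m a b) (\<alpha> c) = m (m b a) (\<alpha> c)" for a b c by (simp add: comm)
  have Ts1: "T a b c = T b a c" for a b c by (simp add: T_def comm)
  have Ts2: "T a b c = T a c b" for a b c
    by (metis T1 T2 T3 Ts1)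
  note N = mr ml Dl mr2 ml2 Dl2 sm2 der aD T1 T2 T3 Ts1 Ts2 scale_left_commute
  show ?thesis
    unfolding hom_GD_bialgebra_def hom_lie_def hom_novikov_def cbilinear_def
    apply (intro conjI allI vs la)
    apply (simp_all add: N Vector_Spaces.linear_iff vs algebra_simps)
    done
qed

end
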